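(* For every $x>0$, $$\frac{L(x,1)^2-G(x,1)^2}{2L(x,1)^2}\le \frac{A(x,1)-L(x,1)}{L(x,1)}\le \log K(x).$$
   Context: $A(x,1)=\frac{x+1}{2}$, $G(x,1)=\sqrt{x}$, $L(x,1)=\frac{x-1}{\log x}$ for $x\ne1$ and $L(1,1)=1$, and $K(x)=\frac{(x+1)^2}{4x}$. *)

theory Defs
  imports Complex_Main
begin

definition AM :: "real \<Rightarrow> real" where "AM x = (x + 1) / 2"
definition GM :: "real \<Rightarrow> real" where "GM x = sqrt x"
definition LM :: "real \<Rightarrow> real" where "LM x = (if x = 1 then 1 else (x - 1) / ln x)"
definition KF :: "real \<Rightarrow> real" where "KF x = (x + 1)^2 / (4 * x)"

end

theory Submission
  imports Defs
begin

lemma sign_lemma: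
  fixes g g' :: "real \<Rightarrow> real"
  assumes d: "\<And>x. x > 0 \<Longrightarrow> (g has_real_derivative g' x) (at x)"
    and nn: "\<And>x. x > 0 \<Longrightarrow> g' x \<ge> 0" and g1: "g 1 = 0" and t: "t > 0"
  shows "(t - 1) * g t \<ge> 0"
proof (cases "t \<ge> 1")
  case True
  have "g 1 \<le> g t"
    by (rule deriv_nonneg_imp_mono[of 1 t g g']) (use d nn True in auto)
  then show ?thesis using True g1 by simp
next
  case False
  have "g t \<le> g 1"
    by (rule deriv_nonneg_imp_mono[of t 1 g g']) (use d nn False t in auto)
  then show ?thesis using False g1 by (simp add: mult_nonpos_nonpos)
qed

lemma key1:
  fixes t :: real assumes t: "t > 0"
  shows "(t - 1) * (2 * ln t - 6 * (t^2 - 1) / (t^2 + 4*t + 1)) \<ge> 0"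
proof (rule sign_lemma[where g = "\<lambda>t. 2 * ln t - 6 * (t^2 - 1) / (t^2 + 4*t + 1)"
      and g' = "\<lambda>t. 2 * (t - 1)^4 / (t * (t^2 + 4*t + 1)^2)"])
  fix x :: real assume x: "x > 0"
  have p: "x^2 + 4*x + 1 > 0" using x by (simp add: add_pos_pos)
  show "((\<lambda>t. 2 * ln t - 6 * (t^2 - 1) / (t^2 + 4*t + 1)) has_real_derivative
        2 * (x - 1)^4 / (x * (x^2 + 4*x + 1)^2)) (at x)"
  proof -
    have "((\<lambda>t. 2 * ln t - 6 * (t^2 - 1) / (t^2 + 4*t + 1)) has_real_derivative
        2 * (1 / x) - 6 * ((2*x) * (x^2 + 4*x + 1) - (x^2 - 1) * (2*x + 4)) / (x^2 + 4*x + 1)^2) (at x)"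
      using x p by (auto intro!: derivative_eq_intros simp: power2_eq_square)
    moreover have "2 * (1 / x) - 6 * ((2*x) * (x^2 + 4*x + 1) - (x^2 - 1) * (2*x + 4)) / (x^2 + 4*x + 1)^2
        = 2 * (x - 1)^4 / (x * (x^2 + 4*x + 1)^2)"
      using x p by (simp add: field_simps) (simp add: algebra_simps power2_eq_square power4_eq_xxxx)
    ultimately show ?thesis by simp
  qed
  show "0 \<le> 2 * (x - 1)^4 / (x * (x^2 + 4*x + 1)^2)" using x by simp
qed (use t in auto)

lemma alg2:
  fixes y k :: real assumes y: "y > 0"
  shows "((1 * (y+1) - (y-1) * 1) / (y+1)^2 * (1 + k)
          + (y-1)/(y+1) * (2 * (1/(y+1)) - 1/y) - (1/y)/2)
        = (4*y*k + (y-1)^2) / (2*y*(y+1)^2)"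
proof -
  have p: "y + 1 > 0" using y by simp
  have "(y+1)^2 > 0" using p by simp
  then show ?thesis using y p by (simp add: divide_simps) (simp add: algebra_simps power2_eq_square)
qed

lemma deriv2: "y > 0 \<Longrightarrow> ((\<lambda>x. (x - 1) / (x + 1) * (1 + (2 * ln (x+1) - ln 4 - ln x)) - ln x / 2) has_real_derivative
        ((1 * (y+1) - (y-1) * 1) / (y+1)^2 * (1 + (2 * ln (y+1) - ln 4 - ln y))
          + (y-1)/(y+1) * (2 * (1/(y+1)) - 1/y) - (1/y)/2)) (at (y::real))"
  apply (rule derivative_eq_intros refl | simp)+
  apply (simp add: power2_eq_square algebra_simps)
  done

lemma key2:
  fixes x :: real assumes x: "x > 0"
  shows "(x - 1) * ((x - 1) / (x + 1) * (1 + ln ((x+1)^2/(4*x))) - ln x / 2) \<ge> 0"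
proof (rule sign_lemma[where g = "\<lambda>x. (x - 1) / (x + 1) * (1 + ln ((x+1)^2/(4*x))) - ln x / 2"
      and g' = "\<lambda>x. (4*x*ln ((x+1)^2/(4*x)) + (x-1)^2) / (2*x*(x+1)^2)"])
  fix y :: real assume y: "y > 0"
  have K: "(y+1)^2/(4*y) \<ge> 1"
  proof -
    have "(y+1)^2 - 4*y = (y-1)^2" by algebra
    then have "4*y \<le> (y+1)^2" by (smt (verit) zero_le_power2)
    then show ?thesis using y by simp
  qed
  have "y + 1 > 0" using y by simp
  have lnK: "ln ((y+1)^2/(4*y)) = 2 * ln (y+1) - ln 4 - ln y"
    using y by (simp add: ln_div ln_mult ln_realpow)
  show "((\<lambda>x. (x - 1) / (x + 1) * (1 + ln ((x+1)^2/(4*x))) - ln x / 2) has_real_derivative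
        (4*y*ln ((y+1)^2/(4*y)) + (y-1)^2) / (2*y*(y+1)^2)) (at y)"
  proof -
    have ev: "\<forall>\<^sub>F x in nhds y. (x - 1) / (x + 1) * (1 + ln ((x+1)^2/(4*x))) - ln x / 2
        = (x - 1) / (x + 1) * (1 + (2 * ln (x+1) - ln 4 - ln x)) - ln x / 2"
    proof -
      have "\<forall>\<^sub>F x in nhds y. x > 0" using eventually_nhds_in_open[OF open_greaterThan[of 0], of y] y by simp
      then show ?thesis by eventually_elim (simp add: ln_div ln_mult ln_realpow)
    qed
    have "((\<lambda>x. (x - 1) / (x + 1) * (1 + (2 * ln (x+1) - ln 4 - ln x)) - ln x / 2) has_real_derivative
        ((1 * (y+1) - (y-1) * 1) / (y+1)^2 * (1 + (2 * ln (y+1) - ln 4 - ln y))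
          + (y-1)/(y+1) * (2 * (1/(y+1)) - 1/y) - (1/y)/2)) (at y)"
      by (rule deriv2[OF y])
    moreover have "((1 * (y+1) - (y-1) * 1) / (y+1)^2 * (1 + (2 * ln (y+1) - ln 4 - ln y))
          + (y-1)/(y+1) * (2 * (1/(y+1)) - 1/y) - (1/y)/2)
        = (4*y*ln ((y+1)^2/(4*y)) + (y-1)^2) / (2*y*(y+1)^2)"
      unfolding lnK[symmetric] using alg2[OF y] .
    ultimately show ?thesis
      using DERIV_cong_ev[OF refl ev refl] by simp
  qed
  show "0 \<le> (4*y*ln ((y+1)^2/(4*y)) + (y-1)^2) / (2*y*(y+1)^2)"
    using y K by (intro divide_nonneg_pos add_nonneg_nonneg mult_nonneg_nonneg) auto
qed (use x in auto)



theorem lemma3p2: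
  fixes x :: real
  assumes "x > 0"
  shows "(LM x ^ 2 - GM x ^ 2) / (2 * LM x ^ 2) \<le> (AM x - LM x) / LM x
         \<and> (AM x - LM x) / LM x \<le> ln (KF x)"
proof (cases "x = 1")
  case True
  then show ?thesis by (simp add: LM_def GM_def AM_def KF_def)
next
  case False
  define t where "t = sqrt x"
  define L where "L = (x - 1) / ln x"
  define A where "A = (x + 1) / 2"
  have t: "t > 0" "x = t^2" using assms by (auto simp: t_def)
  have lnx: "ln x = 2 * ln t" using t by (simp add: ln_realpow)
  have xl: "(x - 1) * ln x > 0"
  proof (cases "x > 1")
    case True then show ?thesis by simp
  next
    case False then have "x < 1" using \<open>x \<noteq> 1\<close> by simp
    then show ?thesis using assms by (simp add: mult_neg_neg)
  qed
  have lnnz: "ln x \<noteq> 0" using xl by auto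
  have Lpos: "L > 0" unfolding L_def using xl
    by (metis divide_pos_pos divide_neg_neg zero_less_mult_iff)
  have LM: "LM x = L" "GM x ^ 2 = t^2" "AM x = A" using False assms
    by (auto simp: LM_def L_def GM_def AM_def A_def t_def)
  define D where "D = t^2 + 4*t + 1"
  have Dp: "D > 0" using t by (simp add: D_def add_pos_pos)
  have k1: "(t - 1) * (2 * ln t - 6 * (t^2 - 1) / D) \<ge> 0" using key1[OF t(1)] by (simp add: D_def)
  have k1': "(t - 1) * (2 * ln t * D - 6 * (t^2 - 1)) \<ge> 0"
  proof -
    have "(t - 1) * (2 * ln t * D - 6 * (t^2 - 1)) = D * ((t - 1) * (2 * ln t - 6 * (t^2 - 1) / D))"
      using Dp by (simp add: field_simps)
    then show ?thesis using k1 Dp by (metis mult_nonneg_nonneg less_eq_real_def)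
  qed
  have k1'': "(x - 1) * (ln x * D - 6 * (x - 1)) \<ge> 0"
  proof -
    have "(x - 1) * (ln x * D - 6 * (x - 1)) = (t + 1) * ((t - 1) * (2 * ln t * D - 6 * (t^2 - 1)))"
      unfolding t(2) ln_realpow by (simp add: algebra_simps power2_eq_square)
    then show ?thesis using k1' t(1) by (metis mult_nonneg_nonneg less_eq_real_def add_pos_pos zero_less_one)
  qed
  have "6 * (x - 1)^2 \<le> D * ((x - 1) * ln x)" using k1'' by (simp add: algebra_simps power2_eq_square)
  moreover have "L * ((x - 1) * ln x) = (x - 1)^2" unfolding L_def using lnnz by (simp add: power2_eq_square)
  ultimately have "6 * L * ((x - 1) * ln x) \<le> D * ((x - 1) * ln x)" by simp
  then have LB: "6 * L \<le> D" using xl by (meson mult_le_cancel_right_pos)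
  have AG: "t \<le> A"
  proof -
    have "0 \<le> (t-1)^2" by simp
    then have "0 \<le> t^2 - 2*t + 1" by (simp add: power2_eq_square algebra_simps)
    then show ?thesis unfolding A_def using t(2) by simp
  qed
  have q: "3 * L^2 - 2 * A * L - t^2 \<le> 0"
  proof -
    have B: "3 * L \<le> 2*t + A" using LB unfolding D_def A_def t(2) by (simp add: field_simps)
    have s1: "3 * L^2 \<le> (2*t + A) * L" using B Lpos by (simp add: power2_eq_square mult_right_mono)
    have e1: "3*L^2 - 2*A*L \<le> (2*t - A)*L" using s1 by (simp add: algebra_simps)
    have e3: "t^2 \<le> A^2" using AG t(1) by (simp add: power_mono)
    show ?thesis
    proof (cases "2*t - A \<ge> 0")
      case True
      have "(2*t - A) * (3*L) \<le> (2*t - A) * (2*t + A)" using B True by (simp add: mult_left_mono)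
      then have e2: "3*((2*t - A)*L) \<le> 4*t^2 - A^2" by (simp add: algebra_simps power2_eq_square)
      show ?thesis using e1 e2 e3 by linarith
    next
      case False
      then have "(2*t - A)*L \<le> 0" using Lpos by (simp add: mult_nonpos_nonneg)
      then show ?thesis using e1 zero_le_power2[of t] by linarith
    qed
  qed
  have q2: "L * (3*L^2) \<le> L * (t^2 + 2*A*L)" using q Lpos by (intro mult_left_mono) auto
  have q3: "L * (L * (L * 3)) \<le> L * (t * t) + A * (L * (L * 2))"
    using q2 by (simp add: algebra_simps power2_eq_square)
  have first: "(L^2 - t^2) / (2 * L^2) \<le> (A - L) / L"
    using q3 Lpos by (simp add: field_simps power2_eq_square)
  have k2: "(x - 1) * ((x - 1) / (x + 1) * (1 + ln (KF x)) - ln x / 2) \<ge> 0"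
    using key2[OF assms] by (simp add: KF_def)
  have "(A - L) / L = (x + 1) * ln x / (2 * (x - 1)) - 1"
    unfolding A_def L_def using lnnz False by (simp add: field_simps)
  moreover have "(x + 1) * ln x / (2 * (x - 1)) \<le> 1 + ln (KF x)"
  proof -
    have xm: "(x - 1)^2 > 0" using False by simp
    have "(x - 1) * ln x / 2 \<le> (x - 1)^2 / (x + 1) * (1 + ln (KF x))"
      using k2 by (simp add: algebra_simps power2_eq_square)
    then have "(x - 1) * ln x * (x + 1) \<le> 2 * (x - 1)^2 * (1 + ln (KF x))"
      using assms by (simp add: field_simps)
    moreover have "x - 1 \<noteq> 0" using False by simp
    then have eq: "(x + 1) * ln x / (2 * (x - 1)) = ((x - 1) * ln x * (x + 1)) / (2 * (x - 1)^2)"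
      by (simp add: power2_eq_square)
    moreover have "2 * (x - 1)^2 > 0" using xm by simp
    ultimately show ?thesis
      by (simp add: pos_divide_le_eq mult.commute)
  qed
  ultimately have second: "(A - L) / L \<le> ln (KF x)" by simp
  show ?thesis using first second LM by simp
qed

end
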